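(* Let $H=\sum_{i,j=1}^n\left(\tfrac12\mu_{ij}p_ip_j+\tfrac12\kappa_{ij}q_iq_j+\tfrac12\gamma_{ij}p_iq_j+\tfrac12\gamma_{ji}q_ip_j\right)$ with $\mu,\kappa$ real symmetric, $\gamma$ real, and $[p_i,q_j]=-i\delta_{ij}$, $[p_i,p_j]=[q_i,q_j]=0$ ($p_i,q_i$ Hermitian). If $H$ is Dirac diagonalizable and $H=\sum_{i=1}^n\omega_id_i^\dagger d_i+C=\sum_{i=1}^n\omega_i'd_i'^\dagger d_i'+C'$ are two diagonalized forms, then the multisets $\{\omega_1,\dots,\omega_n\}$ and $\{\omega_1',\dots,\omega_n'\}$ coincide; i.e., the diagonalized form is unique up to a permutation of the quadratic terms.
   Context: A diagonalized (Dirac) form of $H$ is an expression $H=\sum_i\omega_id_i^\dagger d_i+C$ with $\omega_i,C$ real, where $d_1,\dots,d_n$ are complex linear combinations of $p_1,\dots,p_n,q_1,\dots,q_n$ satisfying $[d_i,d_j^\dagger]=\delta_{ij}$, $[d_i,d_j]=0$. $H$ is Dirac diagonalizable if such a form exists. *)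

theory Defs
  imports Complex_Main "HOL-Library.Multiset"
begin

text \<open>Abstract setting: the operators live in a (nontrivial) unital ring 'a which is a
complex *-algebra: complex scalars act through a central unital ring homomorphism sc,
and star is the adjoint (an anti-multiplicative, conjugate-linear involution).\<close>

definition comm :: "'a::ring \<Rightarrow> 'a \<Rightarrow> 'a" where
  "comm x y = x * y - y * x"

definition star_algebra :: "(complex \<Rightarrow> 'a::ring_1) \<Rightarrow> ('a \<Rightarrow> 'a) \<Rightarrow> bool" where
  "star_algebra sc star \<longleftrightarrow>
     (1::'a) \<noteq> 0 \<and>
     (\<forall>a b. sc (a + b) = sc a + sc b) \<and>
     (\<forall>a b. sc (a * b) = sc a * sc b) \<and>
     sc 1 = 1 \<and>
     (\<forall>a x. sc a * x = x * sc a) \<and>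
     (\<forall>x y. star (x + y) = star x + star y) \<and>
     (\<forall>x y. star (x * y) = star y * star x) \<and>
     (\<forall>a. star (sc a) = sc (cnj a)) \<and>
     (\<forall>x. star (star x) = x)"

definition ccr :: "(complex \<Rightarrow> 'a::ring_1) \<Rightarrow> ('a \<Rightarrow> 'a) \<Rightarrow> ('n \<Rightarrow> 'a) \<Rightarrow> ('n \<Rightarrow> 'a) \<Rightarrow> bool" where
  "ccr sc star p q \<longleftrightarrow>
     (\<forall>i. star (p i) = p i \<and> star (q i) = q i) \<and>
     (\<forall>i j. comm (p i) (q j) = (if i = j then sc (- \<i>) else 0)) \<and>
     (\<forall>i j. comm (p i) (p j) = 0) \<and>
     (\<forall>i j. comm (q i) (q j) = 0)"

definition quad_ham :: "(complex \<Rightarrow> 'a::ring_1) \<Rightarrow> ('n::finite \<Rightarrow> 'a) \<Rightarrow> ('n \<Rightarrow> 'a)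
    \<Rightarrow> ('n \<Rightarrow> 'n \<Rightarrow> real) \<Rightarrow> ('n \<Rightarrow> 'n \<Rightarrow> real) \<Rightarrow> ('n \<Rightarrow> 'n \<Rightarrow> real) \<Rightarrow> 'a" where
  "quad_ham sc p q \<mu> \<kappa> \<gamma> =
     (\<Sum>i\<in>UNIV. \<Sum>j\<in>UNIV.
        sc (of_real (\<mu> i j / 2)) * (p i * p j) + sc (of_real (\<kappa> i j / 2)) * (q i * q j)
      + sc (of_real (\<gamma> i j / 2)) * (p i * q j) + sc (of_real (\<gamma> j i / 2)) * (q i * p j))"

definition dirac_form :: "(complex \<Rightarrow> 'a::ring_1) \<Rightarrow> ('a \<Rightarrow> 'a) \<Rightarrow> ('n::finite \<Rightarrow> 'a) \<Rightarrow> ('n \<Rightarrow> 'a)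
    \<Rightarrow> 'a \<Rightarrow> ('n \<Rightarrow> real) \<Rightarrow> real \<Rightarrow> ('n \<Rightarrow> 'a) \<Rightarrow> bool" where
  "dirac_form sc star p q H \<omega> C d \<longleftrightarrow>
     (\<exists>a b :: 'n \<Rightarrow> 'n \<Rightarrow> complex.
        \<forall>i. d i = (\<Sum>k\<in>UNIV. sc (a i k) * p k + sc (b i k) * q k)) \<and>
     (\<forall>i j. comm (d i) (star (d j)) = (if i = j then 1 else 0)) \<and>
     (\<forall>i j. comm (d i) (d j) = 0) \<and>
     H = (\<Sum>i\<in>UNIV. sc (of_real (\<omega> i)) * (star (d i) * d i)) + sc (of_real C)"

definition dirac_diagonalizable :: "(complex \<Rightarrow> 'a::ring_1) \<Rightarrow> ('a \<Rightarrow> 'a) \<Rightarrow> ('n::finite \<Rightarrow> 'a)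
    \<Rightarrow> ('n \<Rightarrow> 'a) \<Rightarrow> 'a \<Rightarrow> bool" where
  "dirac_diagonalizable sc star p q H \<longleftrightarrow> (\<exists>\<omega> C d. dirac_form sc star p q H \<omega> C d)"

end

theory Submission
  imports Defs "HOL-Analysis.Analysis"
begin

lemma card_le_inj:
  fixes M :: "'n::finite \<Rightarrow> 'n \<Rightarrow> complex" and S S' :: "'n set"
  assumes H: "\<And>\<alpha>. (\<forall>i. i \<notin> S \<longrightarrow> \<alpha> i = 0) \<Longrightarrow> (\<forall>j\<in>S'. (\<Sum>i\<in>UNIV. \<alpha> i * M i j) = 0) \<Longrightarrow> (\<forall>i. \<alpha> i = 0)"
  shows "card S \<le> card S'"
proof -
  define c :: "'n \<Rightarrow> complex^'n" where "c i = (\<chi> j. if j \<in> S' then M i j else 0)" for i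
  define B where "B = (\<lambda>j. axis j (1::complex)) ` S'"
  have cspan: "c i \<in> vec.span B" for i
  proof -
    have "c i = (\<Sum>j\<in>S'. M i j *s axis j 1)"
      by (simp add: c_def vec_eq_iff sum_component axis_def if_distrib cong: if_cong)
    also have "\<dots> \<in> vec.span B"
      by (intro vec.span_sum vec.span_scale vec.span_base) (auto simp: B_def)
    finally show ?thesis .
  qed
  have sumS: "(\<Sum>i\<in>UNIV. \<alpha> i * M i j) = (\<Sum>i\<in>S. \<alpha> i * M i j)" if "\<forall>i. i \<notin> S \<longrightarrow> \<alpha> i = 0" for \<alpha> j
    using that by (intro sum.mono_neutral_right) auto
  have inj: "inj_on c S"
  proof (rule inj_onI, rule ccontr)
    fix i k assume ik: "i \<in> S" "k \<in> S" "c i = c k" "i \<noteq> k"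
    define \<alpha> :: "'n \<Rightarrow> complex" where "\<alpha> m = (if m = i then 1 else if m = k then -1 else 0)" for m
    have "\<forall>j\<in>S'. (\<Sum>m\<in>UNIV. \<alpha> m * M m j) = 0"
    proof
      fix j assume j: "j \<in> S'"
      have "M i j = M k j" using ik(3) j by (simp add: c_def vec_eq_iff) (metis)
      moreover have "(\<Sum>m\<in>UNIV. \<alpha> m * M m j) = (\<Sum>m\<in>{i,k}. \<alpha> m * M m j)"
        by (intro sum.mono_neutral_right) (auto simp: \<alpha>_def)
      ultimately show "(\<Sum>m\<in>UNIV. \<alpha> m * M m j) = 0" using ik(4) by (simp add: \<alpha>_def)
    qed
    moreover have "\<forall>m. m \<notin> S \<longrightarrow> \<alpha> m = 0" using ik by (auto simp: \<alpha>_def)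
    ultimately have "\<forall>m. \<alpha> m = 0" using H by blast
    then show False by (auto simp: \<alpha>_def dest: spec[of _ i])
  qed
  have ind: "vec.independent (c ` S)"
    unfolding vec.independent_explicit
  proof (intro conjI allI impI ballI)
    show "finite (c ` S)" by simp
    fix u v assume u: "(\<Sum>v\<in>c ` S. u v *s v) = 0" and v: "v \<in> c ` S"
    define \<alpha> where "\<alpha> i = (if i \<in> S then u (c i) else 0)" for i
    have "\<forall>j\<in>S'. (\<Sum>i\<in>UNIV. \<alpha> i * M i j) = 0"
    proof
      fix j assume j: "j \<in> S'"
      have "(\<Sum>i\<in>UNIV. \<alpha> i * M i j) = (\<Sum>i\<in>S. \<alpha> i * M i j)"
        by (rule sumS) (simp add: \<alpha>_def)
      also have "\<dots> = (\<Sum>i\<in>S. u (c i) * M i j)" by (simp add: \<alpha>_def)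
      also have "\<dots> = (\<Sum>i\<in>S. u (c i) *s c i) $ j"
        using j by (simp add: sum_component c_def)
      also have "\<dots> = (\<Sum>v\<in>c ` S. u v *s v) $ j"
        by (simp only: sum.reindex[OF inj] o_def)
      finally show "(\<Sum>i\<in>UNIV. \<alpha> i * M i j) = 0" using u by simp
    qed
    moreover have "\<forall>i. i \<notin> S \<longrightarrow> \<alpha> i = 0" by (simp add: \<alpha>_def)
    ultimately have "\<forall>i. \<alpha> i = 0" using H by blast
    then show "u v = 0" using v unfolding \<alpha>_def by (metis (full_types) imageE)
  qed
  have "card (c ` S) \<le> card B"
    using vec.independent_span_bound[OF _ ind, of B] cspan by (auto simp: B_def)
  also have "\<dots> \<le> card S'" by (simp add: B_def card_image_le)
  finally show ?thesis using inj by (simp add: card_image)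
qed

locale setting =
  fixes sc :: "complex \<Rightarrow> 'a::ring_1" and star :: "'a \<Rightarrow> 'a" and p q :: "'n::finite \<Rightarrow> 'a"
  assumes sa: "star_algebra sc star" and cc: "ccr sc star p q"
begin

lemma one_ne: "(1::'a) \<noteq> 0" using sa unfolding star_algebra_def by blast
lemma sc_add: "sc (a + b) = sc a + sc b" using sa unfolding star_algebra_def by blast
lemma sc_mult: "sc (a * b) = sc a * sc b" using sa unfolding star_algebra_def by blast
lemma sc_1: "sc 1 = 1" using sa unfolding star_algebra_def by blast
lemma sc_comm: "sc a * x = x * sc a" using sa unfolding star_algebra_def by blast
lemma star_add: "star (x + y) = star x + star y" using sa unfolding star_algebra_def by blast
lemma star_mult: "star (x * y) = star y * star x" using sa unfolding star_algebra_def by blast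
lemma star_sc: "star (sc a) = sc (cnj a)" using sa unfolding star_algebra_def by blast
lemma star_star: "star (star x) = x" using sa unfolding star_algebra_def by blast

lemma sc_0: "sc 0 = 0"
  using sc_add[of 0 0] by simp
lemma sc_minus: "sc (- a) = - sc a"
  using sc_add[of a "-a"] sc_0 by (metis neg_eq_iff_add_eq_0 add.right_inverse)
lemma sc_diff: "sc (a - b) = sc a - sc b"
  using sc_add[of a "-b"] sc_minus by simp
lemma sc_sum: "sc (\<Sum>i\<in>A. f i) = (\<Sum>i\<in>A. sc (f i))"
  by (induction A rule: infinite_finite_induct) (auto simp: sc_0 sc_add)
lemma sc_inj: "sc a = sc b \<Longrightarrow> a = b"
proof (rule ccontr)
  assume h: "sc a = sc b" "a \<noteq> b"
  have "1 = sc ((a - b) * inverse (a - b))" using h(2) sc_1 by simp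
  also have "\<dots> = 0" by (simp add: sc_mult sc_diff h(1))
  finally show False using one_ne by simp
qed
lemma star_0: "star 0 = 0"
  using star_add[of 0 0] by simp
lemma star_minus: "star (- x) = - star x"
  using star_add[of x "-x"] star_0 by (metis neg_eq_iff_add_eq_0 add.right_inverse)
lemma star_diff: "star (x - y) = star x - star y"
  using star_add[of x "-y"] star_minus by simp
lemma star_sum: "star (\<Sum>i\<in>A. f i) = (\<Sum>i\<in>A. star (f i))"
  by (induction A rule: infinite_finite_induct) (auto simp: star_0 star_add)

lemma comm_add_left: "comm (x + y) z = comm x z + comm y z"
  by (simp add: comm_def algebra_simps)
lemma comm_add_right: "comm z (x + y) = comm z x + comm z y"
  by (simp add: comm_def algebra_simps)
lemma comm_sum_left: "comm (\<Sum>i\<in>A. f i) z = (\<Sum>i\<in>A. comm (f i) z)"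
  by (induction A rule: infinite_finite_induct) (auto simp: comm_def comm_add_left[unfolded comm_def])
lemma comm_sum_right: "comm z (\<Sum>i\<in>A. f i) = (\<Sum>i\<in>A. comm z (f i))"
  by (induction A rule: infinite_finite_induct) (auto simp: comm_def comm_add_right[unfolded comm_def])
lemma sc_swap: "y * (sc a * x) = sc a * (y * x)"
  by (metis mult.assoc sc_comm)
lemma comm_sc_left: "comm (sc a * x) y = sc a * comm x y"
  by (simp add: comm_def right_diff_distrib mult.assoc sc_swap)
lemma comm_sc_right: "comm x (sc a * y) = sc a * comm x y"
  by (simp add: comm_def right_diff_distrib mult.assoc sc_swap)
lemma comm_mult_left: "comm (x * y) z = x * comm y z + comm x z * y"
  by (simp add: comm_def algebra_simps)
lemma comm_sc: "comm (sc a) x = 0"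
  by (simp add: comm_def sc_comm)
lemma comm_swap: "comm y x = - comm x y"
  by (simp add: comm_def)

lemma star_scp: "star (sc a * x) = sc (cnj a) * star x"
  by (simp add: star_mult star_sc sc_comm)

definition lin :: "'a \<Rightarrow> bool" where
  "lin x \<longleftrightarrow> (\<exists>a b. x = (\<Sum>k\<in>UNIV. sc (a k) * p k + sc (b k) * q k))"

lemma herm: "star (p i) = p i" "star (q i) = q i" using cc by (auto simp: ccr_def)

lemma lin_add: "lin x \<Longrightarrow> lin y \<Longrightarrow> lin (x + y)"
  unfolding lin_def
proof (elim exE)
  fix a b a' b' assume "x = (\<Sum>k\<in>UNIV. sc (a k) * p k + sc (b k) * q k)"
    "y = (\<Sum>k\<in>UNIV. sc (a' k) * p k + sc (b' k) * q k)"
  then have "x + y = (\<Sum>k\<in>UNIV. sc (a k + a' k) * p k + sc (b k + b' k) * q k)"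
    by (simp add: sum.distrib[symmetric] sc_add algebra_simps)
  then show "\<exists>a b. x + y = (\<Sum>k\<in>UNIV. sc (a k) * p k + sc (b k) * q k)" by (intro exI, assumption)
qed

lemma lin_0: "lin 0"
  unfolding lin_def by (rule exI[of _ "\<lambda>_. 0"], rule exI[of _ "\<lambda>_. 0"]) (simp add: sc_0)

lemma lin_sum: "(\<And>i. i \<in> A \<Longrightarrow> lin (f i)) \<Longrightarrow> lin (\<Sum>i\<in>A. f i)"
  by (induction A rule: infinite_finite_induct) (auto simp: lin_0 lin_add)

lemma lin_scale: "lin x \<Longrightarrow> lin (sc c * x)"
  unfolding lin_def
proof (elim exE)
  fix a b assume "x = (\<Sum>k\<in>UNIV. sc (a k) * p k + sc (b k) * q k)"
  then have "sc c * x = (\<Sum>k\<in>UNIV. sc (c * a k) * p k + sc (c * b k) * q k)"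
    by (simp add: sum_distrib_left sc_mult algebra_simps)
  then show "\<exists>a b. sc c * x = (\<Sum>k\<in>UNIV. sc (a k) * p k + sc (b k) * q k)" by (intro exI, assumption)
qed

lemma lin_star: "lin x \<Longrightarrow> lin (star x)"
  unfolding lin_def
proof (elim exE)
  fix a b assume "x = (\<Sum>k\<in>UNIV. sc (a k) * p k + sc (b k) * q k)"
  then have "star x = (\<Sum>k\<in>UNIV. sc (cnj (a k)) * p k + sc (cnj (b k)) * q k)"
    by (simp add: star_sum star_add star_scp herm)
  then show "\<exists>a b. star x = (\<Sum>k\<in>UNIV. sc (a k) * p k + sc (b k) * q k)" by (intro exI, assumption)
qed

lemma rsc_add: "x \<in> range sc \<Longrightarrow> y \<in> range sc \<Longrightarrow> x + y \<in> range sc"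
  by (auto simp: sc_add[symmetric])
lemma rsc_mult: "x \<in> range sc \<Longrightarrow> y \<in> range sc \<Longrightarrow> x * y \<in> range sc"
  by (auto simp: sc_mult[symmetric])
lemma rsc_0: "0 \<in> range sc" using sc_0 by (metis rangeI)
lemma rsc_sum: "(\<And>i. i \<in> A \<Longrightarrow> f i \<in> range sc) \<Longrightarrow> (\<Sum>i\<in>A. f i) \<in> range sc"
  by (induction A rule: infinite_finite_induct) (auto simp: rsc_0 rsc_add)
lemma rsc_sc: "sc a \<in> range sc" by simp
lemma rsc_minus: "x \<in> range sc \<Longrightarrow> - x \<in> range sc"
  by (auto simp: sc_minus[symmetric])

lemma comm_pq: "comm (p i) (p j) \<in> range sc" "comm (q i) (q j) \<in> range sc"
   "comm (p i) (q j) \<in> range sc" "comm (q i) (p j) \<in> range sc"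
  using cc unfolding ccr_def
  by (auto simp: rsc_0 comm_swap[of "q i"] intro!: rsc_minus)

lemma comm_lin: "lin x \<Longrightarrow> lin y \<Longrightarrow> comm x y \<in> range sc"
  unfolding lin_def
  by (auto simp: comm_sum_left comm_sum_right comm_add_left comm_add_right comm_sc_left comm_sc_right
      intro!: rsc_sum rsc_add rsc_mult comm_pq)

definition ip :: "'a \<Rightarrow> 'a \<Rightarrow> complex" where
  "ip x y = (SOME z. comm x y = sc z)"

lemma comm_ip: "lin x \<Longrightarrow> lin y \<Longrightarrow> comm x y = sc (ip x y)"
  unfolding ip_def using comm_lin[of x y] by (auto intro: someI)

lemma ip_eq: "lin x \<Longrightarrow> lin y \<Longrightarrow> comm x y = sc z \<Longrightarrow> ip x y = z"
  using comm_ip sc_inj by metis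


lemma ip_add_left: "lin x \<Longrightarrow> lin y \<Longrightarrow> lin z \<Longrightarrow> ip (x + y) z = ip x z + ip y z"
  by (intro ip_eq lin_add) (auto simp: comm_add_left comm_ip sc_add)
lemma ip_add_right: "lin x \<Longrightarrow> lin y \<Longrightarrow> lin z \<Longrightarrow> ip z (x + y) = ip z x + ip z y"
  by (intro ip_eq lin_add) (auto simp: comm_add_right comm_ip sc_add)
lemma ip_scale_left: "lin x \<Longrightarrow> lin y \<Longrightarrow> ip (sc c * x) y = c * ip x y"
  by (intro ip_eq lin_scale) (auto simp: comm_sc_left comm_ip sc_mult)
lemma ip_scale_right: "lin x \<Longrightarrow> lin y \<Longrightarrow> ip x (sc c * y) = c * ip x y"
  by (intro ip_eq lin_scale) (auto simp: comm_sc_right comm_ip sc_mult)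
lemma ip_sum_left: "(\<And>i. i \<in> A \<Longrightarrow> lin (f i)) \<Longrightarrow> lin z \<Longrightarrow> ip (\<Sum>i\<in>A. f i) z = (\<Sum>i\<in>A. ip (f i) z)"
  by (intro ip_eq lin_sum) (auto simp: comm_sum_left comm_ip sc_sum)
lemma ip_sum_right: "(\<And>i. i \<in> A \<Longrightarrow> lin (f i)) \<Longrightarrow> lin z \<Longrightarrow> ip z (\<Sum>i\<in>A. f i) = (\<Sum>i\<in>A. ip z (f i))"
  by (intro ip_eq lin_sum) (auto simp: comm_sum_right comm_ip sc_sum)
lemma ip_swap: "lin x \<Longrightarrow> lin y \<Longrightarrow> ip y x = - ip x y"
  by (intro ip_eq) (auto simp: comm_swap[of y] comm_ip sc_minus)
lemma ip_star: "lin x \<Longrightarrow> lin y \<Longrightarrow> ip (star x) (star y) = - cnj (ip x y)"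
proof (intro ip_eq lin_star)
  assume l: "lin x" "lin y"
  have "comm (star x) (star y) = star (comm y x)"
    by (simp add: comm_def star_diff star_mult)
  also have "\<dots> = sc (- cnj (ip x y))"
    using l by (simp add: comm_ip star_sc ip_swap[of x y])
  finally show "comm (star x) (star y) = sc (- cnj (ip x y))" .
qed

definition ortho :: "('n \<Rightarrow> 'a) \<Rightarrow> bool" where
  "ortho d \<longleftrightarrow> (\<forall>i. lin (d i)) \<and> (\<forall>i j. ip (d i) (star (d j)) = (if i = j then 1 else 0))
     \<and> (\<forall>i j. ip (d i) (d j) = 0)"

lemma dirac_ortho:
  assumes "dirac_form sc star p q H \<omega> C d" shows "ortho d"
proof -
  have l: "lin (d i)" for i using assms unfolding dirac_form_def lin_def by blast
  show ?thesis unfolding ortho_def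
  proof (intro conjI allI)
    fix i j
    show "lin (d i)" by (rule l)
    show "ip (d i) (star (d j)) = (if i = j then 1 else 0)"
      using assms l by (intro ip_eq lin_star) (auto simp: dirac_form_def sc_1 sc_0)
    show "ip (d i) (d j) = 0"
      using assms l by (intro ip_eq) (auto simp: dirac_form_def sc_0)
  qed
qed

definition E :: "('n \<Rightarrow> 'a) \<Rightarrow> ('n \<Rightarrow> complex) \<Rightarrow> ('n \<Rightarrow> complex) \<Rightarrow> 'a" where
  "E d \<alpha> \<beta> = (\<Sum>i\<in>UNIV. sc (\<alpha> i) * d i + sc (\<beta> i) * star (d i))"

context
  fixes d assumes od: "ortho d"
begin

lemma ld: "lin (d i)" "lin (star (d i))" using od lin_star by (auto simp: ortho_def)

lemma lin_E: "lin (E d \<alpha> \<beta>)"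
  unfolding E_def by (intro lin_sum lin_add lin_scale ld)

lemma ip_dd: "ip (d i) (star (d j)) = (if i = j then 1 else 0)" "ip (d i) (d j) = 0"
  "ip (star (d i)) (star (d j)) = 0" "ip (star (d i)) (d j) = (if i = j then -1 else 0)"
  using od ip_star[OF ld(1) ld(1), of i j] ip_swap[OF ld(1)[of j] ld(2)[of i]]
  by (auto simp: ortho_def)

lemma sum_delta_mult: "(\<Sum>i\<in>UNIV. (f :: 'n \<Rightarrow> complex) i * (if i = j then c else (0::complex))) = f j * c"
  by (subst sum.cong[OF refl, of _ _ "\<lambda>i. if i = j then f i * c else 0"]) (auto simp: sum.delta)

lemma ipE_stard: "ip (E d \<alpha> \<beta>) (star (d j)) = \<alpha> j"
  unfolding E_def
  by (simp add: ip_sum_left ip_add_left ip_scale_left ld lin_add lin_scale ip_dd sum_delta_mult)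

lemma ipE_d: "ip (E d \<alpha> \<beta>) (d j) = - \<beta> j"
  unfolding E_def
  by (simp add: ip_sum_left ip_add_left ip_scale_left ld lin_add lin_scale ip_dd sum_delta_mult)

lemma star_E: "star (E d \<alpha> \<beta>) = E d (\<lambda>i. cnj (\<beta> i)) (\<lambda>i. cnj (\<alpha> i))"
  unfolding E_def by (simp add: star_sum star_add star_scp star_star add.commute)

lemma normE: "ip (E d \<alpha> \<beta>) (star (E d \<alpha> \<beta>)) = (\<Sum>i\<in>UNIV. \<alpha> i * cnj (\<alpha> i)) - (\<Sum>i\<in>UNIV. \<beta> i * cnj (\<beta> i))"
proof -
  have "ip (E d \<alpha> \<beta>) (star (E d \<alpha> \<beta>)) = (\<Sum>i\<in>UNIV. cnj (\<beta> i) * ip (E d \<alpha> \<beta>) (d i) + cnj (\<alpha> i) * ip (E d \<alpha> \<beta>) (star (d i)))"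
    unfolding star_E by (subst (2) E_def) (simp add: ip_sum_right ip_add_right ip_scale_right ld lin_E lin_add lin_scale)
  also have "\<dots> = (\<Sum>i\<in>UNIV. \<alpha> i * cnj (\<alpha> i) - \<beta> i * cnj (\<beta> i))"
    by (simp add: ipE_d ipE_stard algebra_simps)
  finally show ?thesis by (simp add: sum_subtractf)
qed

lemma scale_E: "sc c * E d \<alpha> \<beta> = E d (\<lambda>i. c * \<alpha> i) (\<lambda>i. c * \<beta> i)"
  unfolding E_def by (simp add: sum_distrib_left sc_mult algebra_simps)

end

lemma comm_H:
  assumes "dirac_form sc star p q H \<omega> C d" "lin x"
  shows "comm H x = E d (\<lambda>i. of_real (\<omega> i) * ip (star (d i)) x) (\<lambda>i. of_real (\<omega> i) * ip (d i) x)"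
proof -
  have od: "ortho d" by (rule dirac_ortho[OF assms(1)])
  have H: "H = (\<Sum>i\<in>UNIV. sc (of_real (\<omega> i)) * (star (d i) * d i)) + sc (of_real C)"
    using assms(1) by (simp add: dirac_form_def)
  have tm: "comm (sc (of_real (\<omega> i)) * (star (d i) * d i)) x =
     sc (of_real (\<omega> i) * ip (star (d i)) x) * d i + sc (of_real (\<omega> i) * ip (d i) x) * star (d i)" for i
  proof -
    have "comm (sc (of_real (\<omega> i)) * (star (d i) * d i)) x =
      sc (of_real (\<omega> i)) * (star (d i) * sc (ip (d i) x) + sc (ip (star (d i)) x) * d i)"
      using assms(2) by (simp add: comm_sc_left comm_mult_left comm_ip ld[OF od] comm_sc)
    also have "\<dots> = sc (of_real (\<omega> i)) * sc (ip (d i) x) * star (d i) + sc (of_real (\<omega> i)) * sc (ip (star (d i)) x) * d i"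
      by (simp add: distrib_left sc_comm[of _ "star (d i)"] mult.assoc)
    finally show ?thesis by (simp add: sc_mult add.commute)
  qed
  show ?thesis
    unfolding H E_def comm_add_left comm_sum_left comm_sc tm by simp
qed


lemma card_le:
  assumes D: "dirac_form sc star p q H \<omega> C d" and D': "dirac_form sc star p q H \<omega>' C' d'"
    and lam: "w0 \<noteq> 0"
  shows "card {i. \<omega> i = w0} \<le> card {i. \<omega>' i = w0}"
proof (rule card_le_inj[where M = "\<lambda>i j. ip (d i) (star (d' j))"])
  fix \<alpha> :: "'n \<Rightarrow> complex"
  assume supp: "\<forall>i. i \<notin> {i. \<omega> i = w0} \<longrightarrow> \<alpha> i = 0"
    and orth: "\<forall>j\<in>{i. \<omega>' i = w0}. (\<Sum>i\<in>UNIV. \<alpha> i * ip (d i) (star (d' j))) = 0"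
  have od: "ortho d" by (rule dirac_ortho[OF D])
  have od': "ortho d'" by (rule dirac_ortho[OF D'])
  define x where "x = E d \<alpha> (\<lambda>_. 0)"
  have lx: "lin x" unfolding x_def by (rule lin_E[OF od])
  have h1: "ip x (star (d' j)) = (\<Sum>i\<in>UNIV. \<alpha> i * ip (d i) (star (d' j)))" for j
    unfolding x_def E_def
    by (simp add: ip_sum_left ip_add_left ip_scale_left ld[OF od] ld[OF od'] lin_add lin_scale)
  have ea: "of_real (\<omega> i) * \<alpha> i = of_real w0 * \<alpha> i" for i
    using supp by (cases "\<omega> i = w0") auto
  have h2: "comm H x = sc (- of_real w0) * x"
  proof -
    have "comm H x = E d (\<lambda>i. of_real (\<omega> i) * ip (star (d i)) x) (\<lambda>i. of_real (\<omega> i) * ip (d i) x)"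
      by (rule comm_H[OF D lx])
    also have "\<dots> = E d (\<lambda>i. - of_real w0 * \<alpha> i) (\<lambda>i. - of_real w0 * 0)"
    proof -
      have "ip (star (d i)) x = - \<alpha> i" for i
        using ip_swap[OF lx ld(2)[OF od]] ipE_stard[OF od] by (simp add: x_def)
      moreover have "ip (d i) x = 0" for i
        using ip_swap[OF lx ld(1)[OF od]] ipE_d[OF od] by (simp add: x_def)
      ultimately show ?thesis by (simp add: ea)
    qed
    also have "\<dots> = sc (- of_real w0) * x" unfolding x_def by (rule scale_E[OF od, symmetric])
    finally show ?thesis .
  qed
  define a where "a k = (- 1 / of_real w0) * (of_real (\<omega>' k) * ip (star (d' k)) x)" for k
  define b where "b k = (- 1 / of_real w0) * (of_real (\<omega>' k) * ip (d' k) x)" for k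
  have h3: "x = E d' a b"
  proof -
    have "x = sc (- 1 / of_real w0) * (sc (- of_real w0) * x)"
      using lam by (simp add: mult.assoc[symmetric] sc_mult[symmetric] sc_1)
    also have "\<dots> = sc (- 1 / of_real w0) * comm H x" by (simp add: h2)
    also have "\<dots> = E d' a b"
      unfolding comm_H[OF D' lx] scale_E[OF od'] a_def b_def ..
    finally show ?thesis .
  qed
  have h4: "a k = 0" for k
  proof -
    have ak: "ip x (star (d' k)) = a k" using h3 ipE_stard[OF od'] by metis
    have "ip (star (d' k)) x = - a k" using ip_swap[OF lx ld(2)[OF od']] ak by simp
    then have eq: "a k = of_real (\<omega>' k) / of_real w0 * a k" unfolding a_def[of k]
      by (simp add: a_def)
    show ?thesis
    proof (cases "\<omega>' k = w0")
      case True
      then show ?thesis using ak h1 orth by auto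
    next
      case False
      have "a k * (1 - of_real (\<omega>' k) / of_real w0) = 0" using eq by (simp add: algebra_simps)
      moreover have "1 - of_real (\<omega>' k) / (of_real w0 :: complex) \<noteq> 0"
        using False lam by (simp add: field_simps)
      ultimately show ?thesis using False lam by auto
    qed
  qed
  have "ip x (star x) = (\<Sum>i\<in>UNIV. \<alpha> i * cnj (\<alpha> i))"
    using normE[OF od, of \<alpha> "\<lambda>_. 0"] by (simp add: x_def)
  moreover have "ip x (star x) = - (\<Sum>i\<in>UNIV. b i * cnj (b i))"
    using normE[OF od', of a b] h3 h4 by simp
  ultimately have "(\<Sum>i\<in>UNIV. \<alpha> i * cnj (\<alpha> i)) + (\<Sum>i\<in>UNIV. b i * cnj (b i)) = 0"
    by (metis neg_eq_iff_add_eq_0 add.commute)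
  then have "complex_of_real ((\<Sum>i\<in>UNIV. (norm (\<alpha> i))\<^sup>2) + (\<Sum>i\<in>UNIV. (norm (b i))\<^sup>2)) = 0"
    using complex_norm_square[symmetric] by (simp only: of_real_add of_real_sum)
  then have "(\<Sum>i\<in>UNIV. (norm (\<alpha> i))\<^sup>2) + (\<Sum>i\<in>UNIV. (norm (b i))\<^sup>2) = 0"
    by (simp only: of_real_eq_0_iff)
  then have "(\<Sum>i\<in>UNIV. (norm (\<alpha> i))\<^sup>2) = 0"
    by (smt (verit) sum_nonneg zero_le_power2)
  then show "\<forall>i. \<alpha> i = 0"
    by (simp add: sum_nonneg_eq_0_iff)
qed

end

lemma count_img: "count (image_mset f (mset_set (UNIV::'n::finite set))) x = card {i. f i = x}"
  by (simp add: count_image_mset' eq_commute)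

theorem theorem6:
  fixes sc :: "complex \<Rightarrow> 'a::ring_1" and star :: "'a \<Rightarrow> 'a"
    and p q :: "'n::finite \<Rightarrow> 'a"
    and \<mu> \<kappa> \<gamma> :: "'n \<Rightarrow> 'n \<Rightarrow> real"
    and \<omega> \<omega>' :: "'n \<Rightarrow> real" and C C' :: real and d d' :: "'n \<Rightarrow> 'a"
  assumes "star_algebra sc star"
    and "ccr sc star p q"
    and "\<And>i j. \<mu> i j = \<mu> j i"
    and "\<And>i j. \<kappa> i j = \<kappa> j i"
    and "dirac_diagonalizable sc star p q (quad_ham sc p q \<mu> \<kappa> \<gamma>)"
    and "dirac_form sc star p q (quad_ham sc p q \<mu> \<kappa> \<gamma>) \<omega> C d"
    and "dirac_form sc star p q (quad_ham sc p q \<mu> \<kappa> \<gamma>) \<omega>' C' d'"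
  shows "image_mset \<omega> (mset_set UNIV) = image_mset \<omega>' (mset_set UNIV)"
proof -
  interpret setting sc star p q using assms(1,2) by unfold_locales
  define M where "M = image_mset \<omega> (mset_set (UNIV::'n set))"
  define M' where "M' = image_mset \<omega>' (mset_set (UNIV::'n set))"
  have nz: "count M x = count M' x" if "x \<noteq> 0" for x
    unfolding M_def M'_def count_img
    using card_le[OF assms(6) assms(7) that] card_le[OF assms(7) assms(6) that] by (rule antisym)
  have F: "{#x \<in># M. x \<noteq> 0#} = {#x \<in># M'. x \<noteq> 0#}"
    by (rule multiset_eqI) (simp add: nz)
  have sz: "size M = size M'" by (simp add: M_def M'_def)
  have "size M = size {#x \<in># M. x \<noteq> 0#} + count M 0"
    by (subst multiset_partition[of M "\<lambda>x. x \<noteq> 0"]) (simp add: filter_eq_replicate_mset)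
  moreover have "size M' = size {#x \<in># M'. x \<noteq> 0#} + count M' 0"
    by (subst multiset_partition[of M' "\<lambda>x. x \<noteq> 0"]) (simp add: filter_eq_replicate_mset)
  ultimately have "count M 0 = count M' 0" using F sz by simp
  then have "M = M'" using nz by (intro multiset_eqI) (case_tac "x = 0", auto)
  then show ?thesis by (simp add: M_def M'_def)
qed

end
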